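(* For each DISTRIBUTED $\in\{$LOCAL, CONGEST, CONGESTED-CLIQUE$\}$: Multicolored Independent Set $\in$ DISTRIBUTED-W$[1]$ and Red-Blue Dominating Set $\in$ DISTRIBUTED-W$[2]$.
   Context: Distributed models: network = finite connected undirected graph $G$, $n=|V(G)|$, unique $O(\log n)$-bit identifiers; nodes initially know their identifier, neighbours' identifiers, input labels and the parameter; synchronous rounds. LOCAL: unbounded messages to neighbours; CONGEST: $O(\log n)$-bit messages to each neighbour per round; CONGESTED-CLIQUE: $O(\log n)$-bit messages to every node per round. $\mathcal G_{s,t}$: finite connected graphs with unary predicates $P_1..P_s$ and binary predicates $E_1..E_t$; a parameterized problem is $\mathsf P\subseteq\mathcal G_{s,t}\times\mathbb N$. Reductions: a DISTRIBUTED algorithm turning $(G,k)$ into $(G',k')$, represented by $\nu:V(G')\to V(G)$ and $\eta$ mapping each $\{x,y\}\in E(G')$ to a path between $\nu(x),\nu(y)$ (stored at nodes, all nodes know $k'$); radius = max path length; congestion = max number of image paths through an edge. $\mathsf P_1\le_{\mathrm{DISTRIBUTED}}\mathsf P_2$ if for computable $s,r,c,t,p$ there is such a reduction with $|V(G')|\le|V(G)|^{s(k)}$, radius $\le r(k)$, congestion $\le c(k)$ (no congestion bound for LOCAL), $\le t(k)$ rounds, $k'\le p(k)$, preserving membership. $[\mathcal P]^{\mathrm{DISTRIBUTED}}$: problems reducing to a member of $\mathcal P$. Logic: first-order formulas over $\{P_1,..,P_s,E_1,..,E_t\}$ from atoms $x=y,P_i(x),E_j(x,y)$ with $\neg,\wedge,\vee,\exists,\forall$.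 $\Sigma_0=\Pi_0$ = quantifier-free; $\Sigma_{t+1}$ = formulas $\exists x_1\dots\exists x_\ell\,\varphi$ with $\varphi\in\Pi_t$; $\Pi_{t+1}$ = $\forall x_1\dots\forall x_\ell\,\varphi$ with $\varphi\in\Sigma_t$; $\Sigma_{t,1}$ = formulas of $\Sigma_t$ whose quantifier blocks after the leading existential block have length at most 1. Fix a computable injective encoding enc of formulas as bit strings and a computable bijection num from bit strings to $\mathbb N$. For a set $\Phi$ of sentences, DMC-$\Phi$: given a coloured graph $G$ and integer $k$, decide whether there is $\varphi\in\Phi$ with num(enc($\varphi$))$=k$ and $G\models\varphi$; parameter $k$. DISTRIBUTED-W$[t]:=[\text{DMC-}\Sigma_{t,1}]^{\mathrm{DISTRIBUTED}}$. Multicolored Independent Set: instance $k\ge1$, $G\in\mathcal G_{k,1}$, each vertex in at most one of $P_1..P_k$; yes iff there are pairwise non-adjacent $v_1\in P_1,..,v_k\in P_k$; parameter $k$. Red-Blue Dominating Set: a connected graph with vertices coloured red or blue and integer $k$; yes iff at most $k$ red vertices dominate (are adjacent to) all blue vertices; parameter $k$. *)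

theory Defs
  imports Main "HOL-Library.Nat_Bijection"
begin

section \<open>Computability (mu-recursive functions)\<close>

datatype recf = Zero | Succ | Proj nat | Comp recf "recf list"
  | PrimRec recf recf | Minimize recf

inductive evalr :: "recf \<Rightarrow> nat list \<Rightarrow> nat \<Rightarrow> bool" where
  ev_zero: "evalr Zero xs 0"
| ev_succ: "evalr Succ (x # xs) (Suc x)"
| ev_proj: "i < length xs \<Longrightarrow> evalr (Proj i) xs (xs ! i)"
| ev_comp: "length ys = length gs \<Longrightarrow> (\<forall>i<length gs. evalr (gs ! i) xs (ys ! i))
     \<Longrightarrow> evalr f ys z \<Longrightarrow> evalr (Comp f gs) xs z"
| ev_pr0: "evalr f xs z \<Longrightarrow> evalr (PrimRec f g) (0 # xs) z"
| ev_prS: "evalr (PrimRec f g) (n # xs) y \<Longrightarrow> evalr g (y # n # xs) z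
     \<Longrightarrow> evalr (PrimRec f g) (Suc n # xs) z"
| ev_mu: "evalr f (n # xs) 0 \<Longrightarrow> (\<forall>m<n. \<exists>y. y \<noteq> 0 \<and> evalr f (m # xs) y)
     \<Longrightarrow> evalr (Minimize f) xs n"

definition computable :: "(nat \<Rightarrow> nat) \<Rightarrow> bool" where
  "computable f \<longleftrightarrow> (\<exists>e. \<forall>n. evalr e [n] (f n))"

section \<open>Coloured graphs (vertices = identifiers)\<close>

text \<open>Unary predicate P_i is "unary G i", binary predicate E_j is "binary G j";
  only indices 1..s resp. 1..t are used by members of G_{s,t}.\<close>

record cgraph =
  verts :: "nat set"
  unary :: "nat \<Rightarrow> nat \<Rightarrow> bool"
  binary :: "nat \<Rightarrow> nat \<Rightarrow> nat \<Rightarrow> bool"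

definition adj :: "cgraph \<Rightarrow> nat \<Rightarrow> nat \<Rightarrow> bool" where
  "adj G u v \<longleftrightarrow> u \<noteq> v \<and> u \<in> verts G \<and> v \<in> verts G \<and>
     (\<exists>j. binary G j u v \<or> binary G j v u)"

definition base_ok :: "cgraph \<Rightarrow> bool" where
  "base_ok G \<longleftrightarrow> finite (verts G) \<and> verts G \<noteq> {} \<and>
     (\<forall>i v. unary G i v \<longrightarrow> v \<in> verts G) \<and>
     (\<forall>j u v. binary G j u v \<longrightarrow> u \<in> verts G \<and> v \<in> verts G) \<and>
     (\<forall>u\<in>verts G. \<forall>v\<in>verts G. (u, v) \<in> {(a, b). adj G a b}\<^sup>*)"

definition inG :: "nat \<Rightarrow> nat \<Rightarrow> cgraph \<Rightarrow> bool" where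
  "inG s t G \<longleftrightarrow> base_ok G \<and>
     (\<forall>i v. unary G i v \<longrightarrow> 1 \<le> i \<and> i \<le> s) \<and>
     (\<forall>j u v. binary G j u v \<longrightarrow> 1 \<le> j \<and> j \<le> t)"

definition coloured :: "cgraph \<Rightarrow> bool" where
  "coloured G \<longleftrightarrow> (\<exists>s t. inG s t G)"

record pproblem =
  pdom :: "(cgraph \<times> nat) set"
  pyes :: "(cgraph \<times> nat) set"

section \<open>First-order logic\<close>

datatype fm = FEq nat nat | FP nat nat | FE nat nat nat | FNeg fm | FConj fm fm
  | FDisj fm fm | FEx nat fm | FAll nat fm

fun sat :: "cgraph \<Rightarrow> (nat \<Rightarrow> nat) \<Rightarrow> fm \<Rightarrow> bool" where
  "sat G a (FEq x y) = (a x = a y)"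
| "sat G a (FP i x) = unary G i (a x)"
| "sat G a (FE j x y) = binary G j (a x) (a y)"
| "sat G a (FNeg f) = (\<not> sat G a f)"
| "sat G a (FConj f g) = (sat G a f \<and> sat G a g)"
| "sat G a (FDisj f g) = (sat G a f \<or> sat G a g)"
| "sat G a (FEx x f) = (\<exists>v\<in>verts G. sat G (a(x := v)) f)"
| "sat G a (FAll x f) = (\<forall>v\<in>verts G. sat G (a(x := v)) f)"

fun fvars :: "fm \<Rightarrow> nat set" where
  "fvars (FEq x y) = {x, y}"
| "fvars (FP i x) = {x}"
| "fvars (FE j x y) = {x, y}"
| "fvars (FNeg f) = fvars f"
| "fvars (FConj f g) = fvars f \<union> fvars g"
| "fvars (FDisj f g) = fvars f \<union> fvars g"
| "fvars (FEx x f) = fvars f - {x}"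
| "fvars (FAll x f) = fvars f - {x}"

definition sentence :: "fm \<Rightarrow> bool" where
  "sentence f \<longleftrightarrow> fvars f = {}"

definition models :: "cgraph \<Rightarrow> fm \<Rightarrow> bool" where
  "models G f \<longleftrightarrow> sat G (\<lambda>_. 0) f"

fun qfree :: "fm \<Rightarrow> bool" where
  "qfree (FNeg f) = qfree f"
| "qfree (FConj f g) = (qfree f \<and> qfree g)"
| "qfree (FDisj f g) = (qfree f \<and> qfree g)"
| "qfree (FEx x f) = False"
| "qfree (FAll x f) = False"
| "qfree _ = True"

definition exs :: "nat list \<Rightarrow> fm \<Rightarrow> fm" where
  "exs xs f = foldr FEx xs f"

definition alls :: "nat list \<Rightarrow> fm \<Rightarrow> fm" where
  "alls xs f = foldr FAll xs f"

text \<open>Sigma_t / Pi_t with all quantifier blocks of length at most 1.\<close>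
fun Sig1 :: "nat \<Rightarrow> fm set" and Pi1 :: "nat \<Rightarrow> fm set" where
  "Sig1 0 = {f. qfree f}"
| "Pi1 0 = {f. qfree f}"
| "Sig1 (Suc t) = {exs xs f | xs f. length xs \<le> 1 \<and> f \<in> Pi1 t}"
| "Pi1 (Suc t) = {alls xs f | xs f. length xs \<le> 1 \<and> f \<in> Sig1 t}"

text \<open>Sigma_{t,1}: leading existential block arbitrary, later blocks of length at most 1.\<close>
fun Sigma_t1 :: "nat \<Rightarrow> fm set" where
  "Sigma_t1 0 = {f. qfree f}"
| "Sigma_t1 (Suc t) = {exs xs f | xs f. f \<in> Pi1 t}"

text \<open>A fixed computable injective coding of formulas by natural numbers
  (playing the role of num o enc).\<close>
fun fcode :: "fm \<Rightarrow> nat" where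
  "fcode (FEq x y) = prod_encode (0, prod_encode (x, y))"
| "fcode (FP i x) = prod_encode (1, prod_encode (i, x))"
| "fcode (FE j x y) = prod_encode (2, prod_encode (j, prod_encode (x, y)))"
| "fcode (FNeg f) = prod_encode (3, fcode f)"
| "fcode (FConj f g) = prod_encode (4, prod_encode (fcode f, fcode g))"
| "fcode (FDisj f g) = prod_encode (5, prod_encode (fcode f, fcode g))"
| "fcode (FEx x f) = prod_encode (6, prod_encode (x, fcode f))"
| "fcode (FAll x f) = prod_encode (7, prod_encode (x, fcode f))"

definition DMC :: "fm set \<Rightarrow> pproblem" where
  "DMC \<Phi> = \<lparr> pdom = {(G, k). coloured G},
     pyes = {(G, k). coloured G \<and>
        (\<exists>f\<in>\<Phi>. sentence f \<and> fcode f = k \<and> models G f)} \<rparr>"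

section \<open>Distributed algorithms\<close>

datatype dmodel = LOCAL | CONGEST | CONGESTED_CLIQUE

record local_view =
  lv_k :: nat
  lv_id :: nat
  lv_nbrs :: "nat set"
  lv_unary :: "nat set"
  lv_binary :: "(nat \<times> nat \<times> nat) set"

definition view :: "cgraph \<Rightarrow> nat \<Rightarrow> nat \<Rightarrow> local_view" where
  "view G k v = \<lparr> lv_k = k, lv_id = v, lv_nbrs = {w. adj G v w},
     lv_unary = {i. unary G i v},
     lv_binary = {(j, a, b). binary G j a b \<and> (a = v \<or> b = v)} \<rparr>"

text \<open>Local output of a node: the G'-vertices x it hosts (nu x = this node), their
  unary labels, the binary facts E_j(x,y) for hosted x, the stored paths eta for
  edges {x,y} with x hosted and x < y, and the new parameter k'.\<close>
record lout =
  o_verts :: "nat set"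
  o_lab :: "nat \<Rightarrow> nat \<Rightarrow> bool"
  o_rel :: "(nat \<times> nat \<times> nat) set"
  o_path :: "nat \<Rightarrow> nat \<Rightarrow> nat list"
  o_k :: nat

text \<open>States and messages are natural numbers (which can encode any finite data);
  local computation is unrestricted. send: state, target id -> optional message;
  update: state, received messages by sender id -> state.\<close>
record algo =
  a_init :: "local_view \<Rightarrow> nat"
  a_send :: "nat \<Rightarrow> nat \<Rightarrow> nat option"
  a_update :: "nat \<Rightarrow> (nat \<Rightarrow> nat option) \<Rightarrow> nat"
  a_out :: "nat \<Rightarrow> lout"

definition can_send :: "dmodel \<Rightarrow> cgraph \<Rightarrow> nat \<Rightarrow> nat \<Rightarrow> bool" where
  "can_send M G u v \<longleftrightarrow> (if M = CONGESTED_CLIQUE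
      then u \<in> verts G \<and> v \<in> verts G \<and> u \<noteq> v else adj G u v)"

fun run :: "algo \<Rightarrow> dmodel \<Rightarrow> cgraph \<Rightarrow> nat \<Rightarrow> nat \<Rightarrow> nat \<Rightarrow> nat" where
  "run A M G k 0 v = a_init A (view G k v)"
| "run A M G k (Suc r) v = a_update A (run A M G k r v)
     (\<lambda>u. if can_send M G u v then a_send A (run A M G k r u) v else None)"

text \<open>Bandwidth: in CONGEST / CONGESTED-CLIQUE every message is a number below
  n^B, i.e. has O(log n) bits.\<close>
definition bandwidth_ok :: "algo \<Rightarrow> dmodel \<Rightarrow> cgraph \<Rightarrow> nat \<Rightarrow> nat \<Rightarrow> nat \<Rightarrow> bool" where
  "bandwidth_ok A M G k T B \<longleftrightarrow> M = LOCAL \<or>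
     (\<forall>r<T. \<forall>u v. can_send M G u v \<longrightarrow>
        (\<forall>m. a_send A (run A M G k r u) v = Some m \<longrightarrow>
             m < (max 2 (card (verts G))) ^ B))"

definition out_graph :: "cgraph \<Rightarrow> (nat \<Rightarrow> lout) \<Rightarrow> cgraph" where
  "out_graph G Out = (let V' = (\<Union>v\<in>verts G. o_verts (Out v)) in
     \<lparr> verts = V',
       unary = (\<lambda>i x. \<exists>v\<in>verts G. x \<in> o_verts (Out v) \<and> o_lab (Out v) i x),
       binary = (\<lambda>j x y. \<exists>v\<in>verts G. x \<in> o_verts (Out v) \<and> (j, x, y) \<in> o_rel (Out v)
                      \<and> y \<in> V') \<rparr>)"

definition host :: "cgraph \<Rightarrow> (nat \<Rightarrow> lout) \<Rightarrow> nat \<Rightarrow> nat" where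
  "host G Out x = (THE v. v \<in> verts G \<and> x \<in> o_verts (Out v))"

definition eta :: "cgraph \<Rightarrow> (nat \<Rightarrow> lout) \<Rightarrow> nat \<Rightarrow> nat \<Rightarrow> nat list" where
  "eta G Out x y = (if x < y then o_path (Out (host G Out x)) x y
                  else rev (o_path (Out (host G Out y)) y x))"

definition is_path :: "cgraph \<Rightarrow> nat list \<Rightarrow> nat \<Rightarrow> nat \<Rightarrow> bool" where
  "is_path G p a b \<longleftrightarrow> p \<noteq> [] \<and> hd p = a \<and> last p = b \<and>
     (\<forall>i. Suc i < length p \<longrightarrow> adj G (p ! i) (p ! Suc i))"

definition uses_edge :: "nat list \<Rightarrow> nat \<Rightarrow> nat \<Rightarrow> bool" where
  "uses_edge p a b \<longleftrightarrow> (\<exists>i. Suc i < length p \<and> {p ! i, p ! Suc i} = {a, b})"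

definition red_ok :: "dmodel \<Rightarrow> pproblem \<Rightarrow> pproblem \<Rightarrow> algo \<Rightarrow>
    (nat \<Rightarrow> nat) \<Rightarrow> (nat \<Rightarrow> nat) \<Rightarrow> (nat \<Rightarrow> nat) \<Rightarrow> (nat \<Rightarrow> nat) \<Rightarrow> (nat \<Rightarrow> nat) \<Rightarrow>
    nat \<Rightarrow> cgraph \<Rightarrow> nat \<Rightarrow> bool" where
  "red_ok M P1 P2 A s r c t p B G k \<longleftrightarrow>
     (let Out = (\<lambda>v. a_out A (run A M G k (t k) v)); G' = out_graph G Out in
      bandwidth_ok A M G k (t k) B \<and>
      (\<forall>v\<in>verts G. \<forall>w\<in>verts G. v \<noteq> w \<longrightarrow> o_verts (Out v) \<inter> o_verts (Out w) = {}) \<and>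
      (\<exists>k'. (\<forall>v\<in>verts G. o_k (Out v) = k') \<and> k' \<le> p k \<and>
            (G', k') \<in> pdom P2 \<and> ((G, k) \<in> pyes P1 \<longleftrightarrow> (G', k') \<in> pyes P2)) \<and>
      card (verts G') \<le> card (verts G) ^ s k \<and>
      (\<forall>x y. adj G' x y \<longrightarrow> x < y \<longrightarrow>
          is_path G (eta G Out x y) (host G Out x) (host G Out y) \<and>
          length (eta G Out x y) - 1 \<le> r k) \<and>
      (M \<noteq> LOCAL \<longrightarrow> (\<forall>a b. adj G a b \<longrightarrow>
          card {(x, y). adj G' x y \<and> x < y \<and> uses_edge (eta G Out x y) a b} \<le> c k)))"

text \<open>P1 \<le>_M P2. Identifiers are the vertex names; they are Out(log n)-bit, i.e. below
  n^cid for a constant cid; the bandwidth constant B may depend on cid.\<close>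
definition dreduces :: "dmodel \<Rightarrow> pproblem \<Rightarrow> pproblem \<Rightarrow> bool" where
  "dreduces M P1 P2 \<longleftrightarrow>
     (\<exists>s r c t p. computable s \<and> computable r \<and> computable c \<and> computable t \<and>
        computable p \<and>
        (\<exists>A. \<forall>cid. \<exists>B. \<forall>G k. (G, k) \<in> pdom P1 \<and>
            verts G \<subseteq> {..< (max 2 (card (verts G))) ^ cid} \<longrightarrow>
            red_ok M P1 P2 A s r c t p B G k))"

definition DistW :: "dmodel \<Rightarrow> nat \<Rightarrow> pproblem set" where
  "DistW M t = {P. dreduces M P (DMC (Sigma_t1 t))}"

definition MIS :: pproblem where
  "MIS = \<lparr> pdom = {(G, k). k \<ge> 1 \<and> inG k 1 G \<and>
              (\<forall>v i j. unary G i v \<and> unary G j v \<longrightarrow> i = j)},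
           pyes = {(G, k). k \<ge> 1 \<and> inG k 1 G \<and>
              (\<forall>v i j. unary G i v \<and> unary G j v \<longrightarrow> i = j) \<and>
              (\<exists>f. (\<forall>i\<in>{1..k}. unary G i (f i)) \<and>
                   (\<forall>i\<in>{1..k}. \<forall>j\<in>{1..k}. i \<noteq> j \<longrightarrow> \<not> adj G (f i) (f j)))} \<rparr>"

text \<open>Red = P_1, blue = P_2; every vertex has exactly one colour.\<close>
definition RBDS :: pproblem where
  "RBDS = \<lparr> pdom = {(G, k). inG 2 1 G \<and> (\<forall>v\<in>verts G. unary G 1 v \<longleftrightarrow> \<not> unary G 2 v)},
            pyes = {(G, k). inG 2 1 G \<and> (\<forall>v\<in>verts G. unary G 1 v \<longleftrightarrow> \<not> unary G 2 v) \<and>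
              (\<exists>D. D \<subseteq> {v. unary G 1 v} \<and> card D \<le> k \<and>
                   (\<forall>b. unary G 2 b \<longrightarrow> (\<exists>d\<in>D. adj G d b)))} \<rparr>"

end

theory Submission
  imports Defs
begin


lemma ev_proj': "i < length xs \<Longrightarrow> z = xs ! i \<Longrightarrow> evalr (Proj i) xs z"
  using ev_proj by simp

lemma comp1: "evalr g xs y \<Longrightarrow> evalr f [y] z \<Longrightarrow> evalr (Comp f [g]) xs z"
  by (rule ev_comp[where ys="[y]"]) auto

lemma comp2: "evalr g xs y \<Longrightarrow> evalr h xs y' \<Longrightarrow> evalr f [y, y'] z \<Longrightarrow> evalr (Comp f [g, h]) xs z"
  apply (rule ev_comp[where ys="[y, y']"])
    apply simp
   apply (auto simp: less_Suc_eq nth_Cons split: nat.splits)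
  done

definition addr :: recf where "addr = PrimRec (Proj 0) (Comp Succ [Proj 0])"

lemma addr: "evalr addr [n, m] (n + m)"
proof (induction n)
  case 0
  then show ?case unfolding addr_def by (auto intro!: ev_pr0 ev_proj')
next
  case (Suc n)
  then show ?case unfolding addr_def
    by (auto intro!: ev_prS comp1 ev_proj' ev_succ[where xs="[]", simplified])
qed

definition mulr :: recf where "mulr = PrimRec Zero (Comp addr [Proj 0, Proj 2])"

lemma mulr: "evalr mulr [n, m] (n * m)"
proof (induction n)
  case 0
  then show ?case unfolding mulr_def by (auto intro!: ev_pr0 ev_zero)
next
  case (Suc n)
  have "evalr (Comp addr [Proj 0, Proj 2]) [n * m, n, m] (Suc n * m)"
    by (rule comp2[OF ev_proj' ev_proj']) (auto, metis add.commute addr)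
  then show ?case using Suc unfolding mulr_def
    by (auto intro!: ev_prS)
qed

fun constr :: "nat \<Rightarrow> recf" where
  "constr 0 = Zero"
| "constr (Suc c) = Comp Succ [constr c]"

lemma constr: "evalr (constr c) xs c"
  by (induction c) (auto intro: ev_zero comp1 ev_succ[where xs="[]", simplified])

definition TT :: "nat \<Rightarrow> nat" where "TT y = (y + y + 15) * (y + y + 15)"

definition S1r :: recf where "S1r = Comp addr [Comp addr [Proj 0, Proj 0], constr 15]"
definition Tr :: recf where "Tr = Comp mulr [S1r, S1r]"

lemma Tr: "evalr Tr [y] (TT y)"
proof -
  have s: "evalr S1r [y] (y + y + 15)" unfolding S1r_def
    by (rule comp2[OF comp2[OF ev_proj' ev_proj' addr] constr addr]) auto
  show ?thesis unfolding Tr_def TT_def by (rule comp2[OF s s mulr])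
qed

definition iterr :: recf where "iterr = PrimRec (Proj 0) (Comp Tr [Proj 0])"

lemma iterr: "evalr iterr [n, x] ((TT ^^ n) x)"
proof (induction n)
  case 0
  then show ?case unfolding iterr_def by (auto intro!: ev_pr0 ev_proj')
next
  case (Suc n)
  then show ?case unfolding iterr_def
    by (auto intro!: ev_prS comp1[OF _ Tr] ev_proj')
qed

definition pb :: "nat \<Rightarrow> nat" where "pb k = (TT ^^ (2 * ((k + 2) * (k + 2)) + 3)) (k + 2)"

lemma computable_pb: "computable pb"
proof -
  define K2 where "K2 = Comp addr [Proj 0, constr 2]"
  have k2: "evalr K2 [k] (k + 2)" for k unfolding K2_def
    by (rule comp2[OF ev_proj' constr addr]) auto
  define Dr where "Dr = Comp addr [Comp mulr [constr 2, Comp mulr [K2, K2]], constr 3]"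
  have d: "evalr Dr [k] (2 * ((k + 2) * (k + 2)) + 3)" for k unfolding Dr_def
    by (rule comp2[OF comp2[OF constr comp2[OF k2 k2 mulr] mulr] constr addr])
  have "evalr (Comp iterr [Dr, K2]) [k] (pb k)" for k unfolding pb_def
    by (rule comp2[OF d k2 iterr])
  then show ?thesis unfolding computable_def by blast
qed

lemma computable_const: "computable (\<lambda>_. c)"
  unfolding computable_def using constr by blast



lemma fcode_inj: "fcode f = fcode g \<Longrightarrow> f = g"
  by (induction f arbitrary: g; case_tac g; simp)

lemma tri_le: "triangle n + a \<le> (n + 1) * (n + 1)" if "a \<le> n" for n a
proof -
  have "triangle n \<le> n * n" unfolding triangle_def by (induction n) auto
  then show ?thesis using that by simp
qed

lemma pe_le: "a \<le> y + 7 \<Longrightarrow> b \<le> y + 7 \<Longrightarrow> prod_encode (a, b) \<le> TT y"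
proof -
  assume a: "a \<le> y + 7" and b: "b \<le> y + 7"
  have "prod_encode (a, b) \<le> (a + b + 1) * (a + b + 1)"
    unfolding prod_encode_def using tri_le[of a "a+b"] by simp
  also have "\<dots> \<le> (y + y + 15) * (y + y + 15)" using a b by (intro mult_mono) auto
  finally show ?thesis unfolding TT_def .
qed

lemma TT_ge: "y \<le> TT y"
proof -
  have "y \<le> y + y + 15" by simp
  also have "\<dots> \<le> (y + y + 15) * (y + y + 15)" by (rule le_square)
  finally show ?thesis unfolding TT_def .
qed

lemma TT_mono: "x \<le> y \<Longrightarrow> TT x \<le> TT y"
  unfolding TT_def by (intro mult_mono) auto

lemma it_mono: "x \<le> y \<Longrightarrow> (TT ^^ n) x \<le> (TT ^^ n) y"
  by (induction n) (auto intro: TT_mono)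

lemma it_ge: "x \<le> (TT ^^ n) x"
  by (induction n) (auto intro: order_trans[OF _ TT_ge])

lemma it_le: "n \<le> m \<Longrightarrow> (TT ^^ n) x \<le> (TT ^^ m) x"
proof -
  assume "n \<le> m"
  then obtain j where m: "m = j + n" using le_Suc_ex by (metis add.commute)
  show ?thesis unfolding m funpow_add o_def by (rule it_ge)
qed

lemma it_le2: "n \<le> m \<Longrightarrow> x \<le> y \<Longrightarrow> (TT ^^ n) x \<le> (TT ^^ m) y"
  using it_le it_mono order_trans by blast


fun dep :: "fm \<Rightarrow> nat" where
  "dep (FNeg f) = Suc (dep f)"
| "dep (FConj f g) = Suc (max (dep f) (dep g))"
| "dep (FDisj f g) = Suc (max (dep f) (dep g))"
| "dep (FEx x f) = Suc (dep f)"
| "dep (FAll x f) = Suc (dep f)"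
| "dep _ = 0"

fun mx :: "fm \<Rightarrow> nat" where
  "mx (FEq x y) = max x y"
| "mx (FP i x) = max i x"
| "mx (FE j x y) = max j (max x y)"
| "mx (FNeg f) = mx f"
| "mx (FConj f g) = max (mx f) (mx g)"
| "mx (FDisj f g) = max (mx f) (mx g)"
| "mx (FEx x f) = max x (mx f)"
| "mx (FAll x f) = max x (mx f)"

lemma TT2: "a \<le> z + 7 \<Longrightarrow> b \<le> z + 7 \<Longrightarrow> z \<le> w \<Longrightarrow> prod_encode (a, b) \<le> TT w"
  using pe_le TT_mono order_trans by blast

lemma it3: "(TT ^^ 3) x = TT (TT (TT x))" by (simp add: numeral_3_eq_3)
lemma itS: "(TT ^^ (2 * Suc d + 3)) x = TT (TT ((TT ^^ (2 * d + 3)) x))"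
proof -
  have "2 * Suc d + 3 = Suc (Suc (2 * d + 3))" by simp
  then show ?thesis by (simp only: funpow.simps o_def)
qed

lemma atom_b: "c \<le> 7 \<Longrightarrow> prod_encode (x, y) \<le> TT m \<Longrightarrow> prod_encode (c, prod_encode (x, y)) \<le> (TT ^^ 3) m"
  unfolding it3 using TT_ge by (intro TT2[where z="TT m"]) auto

lemma fcode_bound: "fcode f \<le> (TT ^^ (2 * dep f + 3)) (mx f)"
proof (induction f)
  case (FEq x y)
  have "prod_encode (x, y) \<le> TT (max x y)" by (rule pe_le) auto
  then show ?case by (simp del: funpow.simps add: atom_b)
next
  case (FP i x)
  have "prod_encode (i, x) \<le> TT (max i x)" by (rule pe_le) auto
  then show ?case by (simp del: funpow.simps add: atom_b)
next
  case (FE j x y)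
  let ?m = "max j (max x y)"
  have "prod_encode (x, y) \<le> TT ?m" by (rule pe_le) auto
  then have "prod_encode (j, prod_encode (x, y)) \<le> TT (TT ?m)"
    using TT_ge[of ?m] by (intro TT2[where z="TT ?m"]) auto
  then have "prod_encode (2, prod_encode (j, prod_encode (x, y))) \<le> TT (TT (TT ?m))"
    by (intro TT2[where z="TT (TT ?m)"]) auto
  then show ?case by (simp del: funpow.simps add: it3)
next
  case (FNeg f)
  let ?B = "(TT ^^ (2 * dep f + 3)) (mx f)"
  have "prod_encode (3, fcode f) \<le> TT ?B" using FNeg by (intro TT2[where z="?B"]) auto
  also have "\<dots> \<le> TT (TT ?B)" by (rule TT_ge)
  finally show ?case by (simp only: fcode.simps dep.simps mx.simps itS)
next
  case (FConj f g)
  let ?B = "(TT ^^ (2 * max (dep f) (dep g) + 3)) (max (mx f) (mx g))"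
  have 1: "fcode f \<le> ?B" using FConj(1) by (rule order_trans) (intro it_le2, auto)
  have 2: "fcode g \<le> ?B" using FConj(2) by (rule order_trans) (intro it_le2, auto)
  have "prod_encode (fcode f, fcode g) \<le> TT ?B" using 1 2 by (intro TT2[where z="?B"]) auto
  then have "prod_encode (4, prod_encode (fcode f, fcode g)) \<le> TT (TT ?B)" by (intro TT2[where z="TT ?B"]) auto
  then show ?case by (simp only: fcode.simps dep.simps mx.simps itS)
next
  case (FDisj f g)
  let ?B = "(TT ^^ (2 * max (dep f) (dep g) + 3)) (max (mx f) (mx g))"
  have 1: "fcode f \<le> ?B" using FDisj(1) by (rule order_trans) (intro it_le2, auto)
  have 2: "fcode g \<le> ?B" using FDisj(2) by (rule order_trans) (intro it_le2, auto)
  have "prod_encode (fcode f, fcode g) \<le> TT ?B" using 1 2 by (intro TT2[where z="?B"]) auto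
  then have "prod_encode (5, prod_encode (fcode f, fcode g)) \<le> TT (TT ?B)" by (intro TT2[where z="TT ?B"]) auto
  then show ?case by (simp only: fcode.simps dep.simps mx.simps itS)
next
  case (FEx x f)
  let ?B = "(TT ^^ (2 * dep f + 3)) (max x (mx f))"
  have 1: "fcode f \<le> ?B" using FEx by (rule order_trans) (intro it_le2, auto)
  have 2: "x \<le> ?B" using it_ge[of "max x (mx f)"] by auto
  have "prod_encode (x, fcode f) \<le> TT ?B" using 1 2 by (intro TT2[where z="?B"]) auto
  then have "prod_encode (6, prod_encode (x, fcode f)) \<le> TT (TT ?B)" by (intro TT2[where z="TT ?B"]) auto
  then show ?case by (simp only: fcode.simps dep.simps mx.simps itS)
next
  case (FAll x f)
  let ?B = "(TT ^^ (2 * dep f + 3)) (max x (mx f))"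
  have 1: "fcode f \<le> ?B" using FAll by (rule order_trans) (intro it_le2, auto)
  have 2: "x \<le> ?B" using it_ge[of "max x (mx f)"] by auto
  have "prod_encode (x, fcode f) \<le> TT ?B" using 1 2 by (intro TT2[where z="?B"]) auto
  then have "prod_encode (7, prod_encode (x, fcode f)) \<le> TT (TT ?B)" by (intro TT2[where z="TT ?B"]) auto
  then show ?case by (simp only: fcode.simps dep.simps mx.simps itS)
qed

lemma fcode_pb: "dep f \<le> (k + 2) * (k + 2) \<Longrightarrow> mx f \<le> k + 2 \<Longrightarrow> fcode f \<le> pb k"
  unfolding pb_def by (rule order_trans[OF fcode_bound it_le2]) auto



definition st :: "local_view \<Rightarrow> nat" where
  "st lv = prod_encode (lv_k lv, prod_encode (lv_id lv,
      prod_encode (set_encode (lv_unary lv), set_encode (lv_nbrs lv))))"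

definition outf :: "(nat \<Rightarrow> fm) \<Rightarrow> nat \<Rightarrow> lout" where
  "outf \<phi> s = (case prod_decode s of (k, r) \<Rightarrow> case prod_decode r of (v, r2) \<Rightarrow>
     case prod_decode r2 of (u, n) \<Rightarrow>
     \<lparr> o_verts = {v}, o_lab = \<lambda>i x. i \<in> set_decode u,
       o_rel = (\<lambda>w. (1, v, w)) ` set_decode n, o_path = \<lambda>x y. [x, y],
       o_k = fcode (\<phi> k) \<rparr>)"

definition alg :: "(nat \<Rightarrow> fm) \<Rightarrow> algo" where
  "alg \<phi> = \<lparr> a_init = st, a_send = \<lambda>_ _. None, a_update = \<lambda>s _. s, a_out = outf \<phi> \<rparr>"

definition normG :: "cgraph \<Rightarrow> cgraph" where
  "normG G = \<lparr> verts = verts G, unary = \<lambda>i x. x \<in> verts G \<and> unary G i x,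
      binary = \<lambda>j x y. j = 1 \<and> adj G x y \<rparr>"

lemma adj_sym: "adj G x y \<Longrightarrow> adj G y x" unfolding adj_def by blast

lemma adj_normG: "adj (normG G) = adj G"
  unfolding normG_def by (auto simp: fun_eq_iff adj_def[of "\<lparr>verts = _, unary = _, binary = _\<rparr>"])
    (auto simp: adj_def)

lemma base_ok_normG: "base_ok G \<Longrightarrow> base_ok (normG G)"
  unfolding base_ok_def using adj_normG[of G]
  by (simp add: normG_def adj_def)

lemma inG_normG: "inG s t G \<Longrightarrow> inG s 1 (normG G)"
  unfolding inG_def using base_ok_normG by (auto simp: normG_def)

lemma outv:
  assumes "inG s t G" "v \<in> verts G"
  shows "outf \<phi> (st (view G k v)) = \<lparr> o_verts = {v}, o_lab = \<lambda>i x. unary G i v,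
       o_rel = (\<lambda>w. (1, v, w)) ` {w. adj G v w}, o_path = \<lambda>x y. [x, y],
       o_k = fcode (\<phi> k) \<rparr>"
proof -
  have f1: "finite {i. unary G i v}"
    by (rule finite_subset[of _ "{1..s}"]) (use assms in \<open>auto simp: inG_def\<close>)
  have f2: "finite {w. adj G v w}"
    by (rule finite_subset[of _ "verts G"]) (use assms in \<open>auto simp: inG_def base_ok_def adj_def\<close>)
  show ?thesis unfolding outf_def st_def view_def using f1 f2 by simp
qed

lemma red_gen:
  assumes G: "inG s0 t0 G" and pk: "fcode (\<phi> k) \<le> p k"
    and eqv: "(G, k) \<in> pyes P1 \<longleftrightarrow> (normG G, fcode (\<phi> k)) \<in> pyes (DMC \<Phi>)"
  shows "red_ok M P1 (DMC \<Phi>) (alg \<phi>) (\<lambda>_. 1) (\<lambda>_. 1) (\<lambda>_. 1) (\<lambda>_. 0) p B G k"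
proof -
  define Out where "Out = (\<lambda>v. a_out (alg \<phi>) (run (alg \<phi>) M G k 0 v))"
  have Out: "Out v = \<lparr> o_verts = {v}, o_lab = \<lambda>i x. unary G i v,
       o_rel = (\<lambda>w. (1, v, w)) ` {w. adj G v w}, o_path = \<lambda>x y. [x, y],
       o_k = fcode (\<phi> k) \<rparr>" if "v \<in> verts G" for v
    unfolding Out_def using outv[OF G that] by (simp add: alg_def)
  have bo: "base_ok G" using G by (simp add: inG_def)
  have adjV: "adj G x y \<Longrightarrow> x \<in> verts G \<and> y \<in> verts G" for x y by (simp add: adj_def)
  have unV: "unary G i x \<Longrightarrow> x \<in> verts G" for i x using bo by (simp add: base_ok_def)
  have OG: "out_graph G Out = normG G"
    unfolding out_graph_def normG_def Let_def
    using Out adjV unV by (auto simp: fun_eq_iff)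
  have host: "host G Out x = x" if "x \<in> verts G" for x
    unfolding host_def using Out that by (intro the_equality) auto
  have eta: "eta G Out x y = [x, y]" if "x \<in> verts G" "x < y" for x y
    unfolding eta_def using that host Out by simp
  have cong: "{(x, y). adj G x y \<and> x < y \<and> uses_edge [x, y] a b} \<subseteq> {(min a b, max a b)}" for a b
    by (auto simp: uses_edge_def less_Suc_eq nth_Cons doubleton_eq_iff)
  have card1: "card {(x, y). adj G x y \<and> x < y \<and> uses_edge [x, y] a b} \<le> 1" for a b
    using card_mono[OF _ cong[of a b]] by simp
  have cong': "{(x, y). adj G x y \<and> x < y \<and> uses_edge (eta G Out x y) a b}
      = {(x, y). adj G x y \<and> x < y \<and> uses_edge [x, y] a b}" for a b
    using eta adjV by auto
  have dom: "(normG G, fcode (\<phi> k)) \<in> pdom (DMC \<Phi>)"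
    using inG_normG[OF G] by (auto simp: DMC_def coloured_def)
  show ?thesis
    unfolding red_ok_def Let_def Out_def[symmetric] OG adj_normG
  proof (intro conjI)
    show "bandwidth_ok (alg \<phi>) M G k ((\<lambda>_. 0) k) B" by (simp add: bandwidth_ok_def)
    show "\<forall>v\<in>verts G. \<forall>w\<in>verts G. v \<noteq> w \<longrightarrow> o_verts (Out v) \<inter> o_verts (Out w) = {}"
      using Out by simp
    show "\<exists>k'. (\<forall>v\<in>verts G. o_k (Out v) = k') \<and> k' \<le> p k \<and> (normG G, k') \<in> pdom (DMC \<Phi>) \<and>
        ((G, k) \<in> pyes P1 \<longleftrightarrow> (normG G, k') \<in> pyes (DMC \<Phi>))"
      using Out pk dom eqv by (intro exI[of _ "fcode (\<phi> k)"]) simp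
    show "card (verts (normG G)) \<le> card (verts G) ^ 1" by (simp add: normG_def)
    show "\<forall>x y. adj G x y \<longrightarrow> x < y \<longrightarrow> is_path G (eta G Out x y) (host G Out x) (host G Out y) \<and>
        length (eta G Out x y) - 1 \<le> 1"
      using eta host adjV by (auto simp: is_path_def)
    show "M \<noteq> LOCAL \<longrightarrow> (\<forall>a b. adj G a b \<longrightarrow>
        card {(x, y). adj G x y \<and> x < y \<and> uses_edge (eta G Out x y) a b} \<le> 1)"
      using card1 cong' by simp
  qed
qed

lemma dreduces_gen:
  assumes "\<And>G k. (G, k) \<in> pdom P1 \<Longrightarrow> \<exists>s0 t0. inG s0 t0 G"
    and "\<And>k. fcode (\<phi> k) \<le> pb k"
    and "\<And>G k. (G, k) \<in> pdom P1 \<Longrightarrow>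
       ((G, k) \<in> pyes P1 \<longleftrightarrow> (normG G, fcode (\<phi> k)) \<in> pyes (DMC \<Phi>))"
  shows "dreduces M P1 (DMC \<Phi>)"
  unfolding dreduces_def
  apply (rule exI[of _ "\<lambda>_. 1"], rule exI[of _ "\<lambda>_. 1"], rule exI[of _ "\<lambda>_. 1"],
      rule exI[of _ "\<lambda>_. 0"], rule exI[of _ pb])
  using assms red_gen computable_const computable_pb by metis



lemma sat_exs: "distinct xs \<Longrightarrow> sat G a (exs xs f) \<longleftrightarrow>
   (\<exists>g. (\<forall>x\<in>set xs. g x \<in> verts G) \<and> sat G (override_on a g (set xs)) f)"
proof (induction xs arbitrary: a)
  case Nil
  then show ?case by (simp add: exs_def)
next
  case (Cons x xs)
  have xn: "x \<notin> set xs" and d: "distinct xs" using Cons.prems by auto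
  have ov: "override_on (a(x := v)) g (set xs) = override_on a (g(x := v)) (set (x # xs))" for v g
    using xn by (auto simp: override_on_def fun_eq_iff)
  have "sat G a (exs (x # xs) f) \<longleftrightarrow> (\<exists>v\<in>verts G. sat G (a(x := v)) (exs xs f))"
    by (simp add: exs_def)
  also have "\<dots> \<longleftrightarrow> (\<exists>v\<in>verts G. \<exists>g. (\<forall>y\<in>set xs. g y \<in> verts G) \<and>
        sat G (override_on a (g(x := v)) (set (x # xs))) f)"
    by (simp only: Cons.IH[OF d] ov)
  also have "\<dots> \<longleftrightarrow> (\<exists>g. (\<forall>y\<in>set (x # xs). g y \<in> verts G) \<and> sat G (override_on a g (set (x # xs))) f)"
  proof
    assume "\<exists>v\<in>verts G. \<exists>g. (\<forall>y\<in>set xs. g y \<in> verts G) \<and>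
        sat G (override_on a (g(x := v)) (set (x # xs))) f"
    then obtain v g where "v \<in> verts G" "\<forall>y\<in>set xs. g y \<in> verts G"
       "sat G (override_on a (g(x := v)) (set (x # xs))) f" by blast
    then show "\<exists>g. (\<forall>y\<in>set (x # xs). g y \<in> verts G) \<and> sat G (override_on a g (set (x # xs))) f"
      by (intro exI[of _ "g(x := v)"]) auto
  next
    assume "\<exists>g. (\<forall>y\<in>set (x # xs). g y \<in> verts G) \<and> sat G (override_on a g (set (x # xs))) f"
    then obtain g where "\<forall>y\<in>set (x # xs). g y \<in> verts G" "sat G (override_on a g (set (x # xs))) f"
      by blast
    moreover have "g(x := g x) = g" by simp
    ultimately show "\<exists>v\<in>verts G. \<exists>g. (\<forall>y\<in>set xs. g y \<in> verts G) \<and>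
        sat G (override_on a (g(x := v)) (set (x # xs))) f"
      by (intro bexI[of _ "g x"] exI[of _ g]) auto
  qed
  finally show ?case .
qed

definition conjs :: "fm list \<Rightarrow> fm" where "conjs fs = foldr FConj fs (FEq 0 0)"
definition disjs :: "fm list \<Rightarrow> fm" where "disjs fs = foldr FDisj fs (FNeg (FEq 0 0))"

lemma sat_conjs: "sat G a (conjs fs) \<longleftrightarrow> (\<forall>f\<in>set fs. sat G a f)"
  unfolding conjs_def by (induction fs) auto
lemma sat_disjs: "sat G a (disjs fs) \<longleftrightarrow> (\<exists>f\<in>set fs. sat G a f)"
  unfolding disjs_def by (induction fs) auto
lemma fvars_conjs: "fvars (conjs fs) = {0} \<union> (\<Union>f\<in>set fs. fvars f)"
  unfolding conjs_def by (induction fs) auto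
lemma fvars_disjs: "fvars (disjs fs) = {0} \<union> (\<Union>f\<in>set fs. fvars f)"
  unfolding disjs_def by (induction fs) auto
lemma qfree_conjs: "(\<forall>f\<in>set fs. qfree f) \<Longrightarrow> qfree (conjs fs)"
  unfolding conjs_def by (induction fs) auto
lemma qfree_disjs: "(\<forall>f\<in>set fs. qfree f) \<Longrightarrow> qfree (disjs fs)"
  unfolding disjs_def by (induction fs) auto
lemma dep_conjs: "(\<forall>f\<in>set fs. dep f \<le> d) \<Longrightarrow> dep (conjs fs) \<le> length fs + d"
  unfolding conjs_def by (induction fs) auto
lemma dep_disjs: "(\<forall>f\<in>set fs. dep f \<le> d) \<Longrightarrow> 1 \<le> d \<Longrightarrow> dep (disjs fs) \<le> length fs + d"
  unfolding disjs_def by (induction fs) auto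
lemma mx_conjs: "(\<forall>f\<in>set fs. mx f \<le> m) \<Longrightarrow> mx (conjs fs) \<le> m"
  unfolding conjs_def by (induction fs) auto
lemma mx_disjs: "(\<forall>f\<in>set fs. mx f \<le> m) \<Longrightarrow> mx (disjs fs) \<le> m"
  unfolding disjs_def by (induction fs) auto
lemma fvars_exs: "fvars (exs xs f) = fvars f - set xs"
  unfolding exs_def by (induction xs) auto
lemma dep_exs: "dep (exs xs f) = length xs + dep f"
  unfolding exs_def by (induction xs) auto
lemma mx_exs: "(\<forall>x\<in>set xs. x \<le> m) \<Longrightarrow> mx f \<le> m \<Longrightarrow> mx (exs xs f) \<le> m"
  unfolding exs_def by (induction xs) auto



definition misL :: "nat \<Rightarrow> fm list" where
  "misL k = map (\<lambda>i. FP i i) [1..<k+1] @ concat (map (\<lambda>i. map (\<lambda>j. FNeg (FE 1 i j)) [1..<k+1]) [1..<k+1])"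

lemma setL: "set [1..<k+1] = {1..k}" by auto

lemma ball_misL: "(\<forall>f\<in>set (misL k). P f) \<longleftrightarrow>
   (\<forall>i\<in>{1..k}. P (FP i i)) \<and> (\<forall>i\<in>{1..k}. \<forall>j\<in>{1..k}. P (FNeg (FE 1 i j)))"
proof -
  have "set (misL k) = (\<lambda>i. FP i i) ` {1..k} \<union> (\<Union>i\<in>{1..k}. (\<lambda>j. FNeg (FE 1 i j)) ` {1..k})"
    by (simp only: misL_def set_append set_map set_concat setL image_image)
  then show ?thesis by (simp only: ball_Un ball_UN ball_simps(9))
qed

definition phiM :: "nat \<Rightarrow> fm" where
  "phiM k = exs (0 # [1..<k+1]) (conjs (misL k))"

lemma phiM_Sigma: "phiM k \<in> Sigma_t1 1"
proof -
  have "qfree (conjs (misL k))" by (rule qfree_conjs) (auto simp: misL_def)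
  then show ?thesis unfolding phiM_def by auto
qed

lemma phiM_sentence: "sentence (phiM k)"
proof -
  have "\<forall>f\<in>set (misL k). fvars f \<subseteq> {1..k}" unfolding ball_misL by auto
  then have "(\<Union>f\<in>set (misL k). fvars f) \<subseteq> {1..k}" by (intro UN_least) blast
  then have "fvars (conjs (misL k)) \<subseteq> {0..k}" unfolding fvars_conjs by auto
  moreover have "set (0 # [1..<k+1]) = {0..k}" by auto
  ultimately show ?thesis unfolding sentence_def phiM_def fvars_exs by auto
qed

lemma phiM_pb: "fcode (phiM k) \<le> pb k"
proof (rule fcode_pb)
  have len: "length (misL k) = k + k * k"
    unfolding misL_def by (simp add: length_concat sum_list_triv o_def)
  have "dep (conjs (misL k)) \<le> length (misL k) + 1"
    by (rule dep_conjs) (simp only: ball_misL, auto)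
  then show "dep (phiM k) \<le> (k + 2) * (k + 2)"
    unfolding phiM_def dep_exs len by (simp add: algebra_simps)
  have "mx (conjs (misL k)) \<le> k + 2"
    by (rule mx_conjs) (simp only: ball_misL, auto)
  then show "mx (phiM k) \<le> k + 2"
    unfolding phiM_def by (intro mx_exs) (auto simp del: upt_Suc simp add: setL)
qed

lemma adj_irrefl: "\<not> adj G x x" by (simp add: adj_def)

lemma MIS_sem:
  assumes dom: "(G, k) \<in> pdom MIS"
  shows "(G, k) \<in> pyes MIS \<longleftrightarrow> models (normG G) (phiM k)"
proof -
  have k1: "k \<ge> 1" and G: "inG k 1 G" using dom by (auto simp: MIS_def)
  have unV: "unary G i x \<Longrightarrow> x \<in> verts G" for i x using G by (simp add: inG_def base_ok_def)
  let ?S = "set (0 # [1..<k+1])"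
  have vN: "verts (normG G) = verts G" by (simp add: normG_def)
  have body: "sat (normG G) b (conjs (misL k)) \<longleftrightarrow>
     (\<forall>i\<in>{1..k}. b i \<in> verts G \<and> unary G i (b i)) \<and> (\<forall>i\<in>{1..k}. \<forall>j\<in>{1..k}. \<not> adj G (b i) (b j))" for b
    unfolding sat_conjs ball_misL by (auto simp: normG_def)
  have "models (normG G) (phiM k) \<longleftrightarrow> (\<exists>g. (\<forall>x\<in>?S. g x \<in> verts G) \<and>
      (\<forall>i\<in>{1..k}. g i \<in> verts G \<and> unary G i (g i)) \<and> (\<forall>i\<in>{1..k}. \<forall>j\<in>{1..k}. \<not> adj G (g i) (g j)))"
  proof -
    have ov: "override_on (\<lambda>_. 0) g ?S i = g i" if "i \<in> {1..k}" for g i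
      using that by (auto simp: override_on_def)
    show ?thesis unfolding models_def phiM_def
      by (subst sat_exs) (simp, simp only: vN body ov cong: ball_cong)
  qed
  also have "\<dots> \<longleftrightarrow> (\<exists>f. (\<forall>i\<in>{1..k}. unary G i (f i)) \<and>
              (\<forall>i\<in>{1..k}. \<forall>j\<in>{1..k}. i \<noteq> j \<longrightarrow> \<not> adj G (f i) (f j)))" (is "?L \<longleftrightarrow> ?R")
  proof
    assume ?L then show ?R by blast
  next
    assume ?R
    then obtain f where f1: "\<forall>i\<in>{1..k}. unary G i (f i)"
       and f2: "\<forall>i\<in>{1..k}. \<forall>j\<in>{1..k}. i \<noteq> j \<longrightarrow> \<not> adj G (f i) (f j)" by blast
    define g where "g x = (if x = 0 then f 1 else f x)" for x
    have "unary G 1 (f 1)" using f1 k1 by auto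
    then have "f 1 \<in> verts G" using unV by blast
    have a: "\<forall>x\<in>?S. g x \<in> verts G"
    proof
      fix x assume "x \<in> ?S"
      then have "x = 0 \<or> x \<in> {1..k}" by auto
      then show "g x \<in> verts G"
      proof
        assume "x \<in> {1..k}" then have "unary G x (f x)" "x \<noteq> 0" using f1 by auto
        then show ?thesis using unV by (auto simp: g_def)
      qed (use \<open>f 1 \<in> verts G\<close> in \<open>simp add: g_def\<close>)
    qed
    have b: "\<forall>i\<in>{1..k}. g i \<in> verts G \<and> unary G i (g i)" using f1 unV by (auto simp: g_def)
    have c: "\<forall>i\<in>{1..k}. \<forall>j\<in>{1..k}. \<not> adj G (g i) (g j)"
    proof (intro ballI)
      fix i j assume i: "i \<in> {1..k}" and j: "j \<in> {1..k}"
      show "\<not> adj G (g i) (g j)"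
      proof (cases "i = j")
        case True then show ?thesis using adj_irrefl by simp
      next
        case False then show ?thesis using f2 i j by (auto simp: g_def)
      qed
    qed
    show ?L using a b c by blast
  qed
  finally show ?thesis using dom by (auto simp: MIS_def)
qed

lemma MIS_W1: "MIS \<in> DistW M 1"
  unfolding DistW_def
proof (rule CollectI, rule dreduces_gen[where \<phi>=phiM])
  show "\<exists>s0 t0. inG s0 t0 G" if "(G, k) \<in> pdom MIS" for G k using that by (auto simp: MIS_def)
  show "fcode (phiM k) \<le> pb k" for k by (rule phiM_pb)
  show "(G, k) \<in> pyes MIS \<longleftrightarrow> (normG G, fcode (phiM k)) \<in> pyes (DMC (Sigma_t1 1))"
    if d: "(G, k) \<in> pdom MIS" for G k
  proof -
    have col: "coloured (normG G)" using d inG_normG unfolding MIS_def coloured_def by auto blast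
    have "(normG G, fcode (phiM k)) \<in> pyes (DMC (Sigma_t1 1)) \<longleftrightarrow> coloured (normG G) \<and>
       (\<exists>f\<in>Sigma_t1 1. sentence f \<and> fcode f = fcode (phiM k) \<and> models (normG G) f)"
      by (simp add: DMC_def)
    also have "\<dots> \<longleftrightarrow> models (normG G) (phiM k)"
    proof
      assume "coloured (normG G) \<and> (\<exists>f\<in>Sigma_t1 1. sentence f \<and> fcode f = fcode (phiM k) \<and> models (normG G) f)"
      then obtain f where "fcode f = fcode (phiM k)" "models (normG G) f" by blast
      then show "models (normG G) (phiM k)" using fcode_inj by metis
    next
      assume "models (normG G) (phiM k)"
      then show "coloured (normG G) \<and> (\<exists>f\<in>Sigma_t1 1. sentence f \<and> fcode f = fcode (phiM k) \<and> models (normG G) f)"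
        using col phiM_Sigma phiM_sentence by blast
    qed
    finally have "(normG G, fcode (phiM k)) \<in> pyes (DMC (Sigma_t1 1)) \<longleftrightarrow> models (normG G) (phiM k)" .
    then show ?thesis using MIS_sem[OF d] by simp
  qed
qed



definition rbL :: "nat \<Rightarrow> fm list" where
  "rbL k = map (\<lambda>i. FP 1 i) [1..<k+1] @
     [FDisj (FNeg (FP 2 0)) (disjs (map (\<lambda>i. FE 1 i 0) [1..<k+1]))]"

definition phiR :: "nat \<Rightarrow> fm" where
  "phiR k = exs [1..<k+1] (alls [0] (conjs (rbL k)))"

lemma ball_rbL: "(\<forall>f\<in>set (rbL k). P f) \<longleftrightarrow>
   (\<forall>i\<in>{1..k}. P (FP 1 i)) \<and> P (FDisj (FNeg (FP 2 0)) (disjs (map (\<lambda>i. FE 1 i 0) [1..<k+1])))"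
proof -
  have "set (rbL k) = (\<lambda>i. FP 1 i) ` {1..k} \<union> {FDisj (FNeg (FP 2 0)) (disjs (map (\<lambda>i. FE 1 i 0) [1..<k+1]))}"
    by (simp only: rbL_def set_append set_map setL list.set)
  then show ?thesis by (simp only: ball_Un ball_simps(9)) simp
qed

lemma alls1: "alls [x] f = FAll x f" by (simp add: alls_def)

lemma phiR_Sigma: "phiR k \<in> Sigma_t1 2"
proof -
  have q: "qfree (conjs (rbL k))"
    by (rule qfree_conjs) (simp only: ball_rbL, auto intro!: qfree_disjs)
  have "alls [0] (conjs (rbL k)) \<in> Pi1 1" using q by (auto intro!: exI[of _ "[0]"])
  then show ?thesis unfolding phiR_def numeral_2_eq_2 by auto
qed

lemma phiR_sentence: "sentence (phiR k)"
proof -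
  have "fvars (disjs (map (\<lambda>i. FE 1 i 0) [1..<k+1])) \<subseteq> {0..k}"
    unfolding fvars_disjs by auto
  then have "\<forall>f\<in>set (rbL k). fvars f \<subseteq> {0..k}" unfolding ball_rbL by auto
  then have "(\<Union>f\<in>set (rbL k). fvars f) \<subseteq> {0..k}" by (intro UN_least) blast
  then have "fvars (conjs (rbL k)) \<subseteq> {0..k}" unfolding fvars_conjs by auto
  moreover have "set [1..<k+1] = {1..k}" by auto
  ultimately show ?thesis unfolding sentence_def phiR_def fvars_exs alls1 by auto
qed

lemma phiR_pb: "fcode (phiR k) \<le> pb k"
proof (rule fcode_pb)
  have d1: "dep (disjs (map (\<lambda>i. FE 1 i 0) [1..<k+1])) \<le> k + 1"
    using dep_disjs[of "map (\<lambda>i. FE 1 i 0) [1..<k+1]" 1] by (simp del: upt_Suc)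
  have "dep (conjs (rbL k)) \<le> length (rbL k) + (k + 2)"
    by (rule dep_conjs) (simp only: ball_rbL, use d1 in auto)
  moreover have "length (rbL k) = k + 1" by (simp add: rbL_def)
  ultimately show "dep (phiR k) \<le> (k + 2) * (k + 2)"
    unfolding phiR_def dep_exs alls1 by (simp add: algebra_simps)
  have m1: "mx (disjs (map (\<lambda>i. FE 1 i 0) [1..<k+1])) \<le> k + 2"
    by (rule mx_disjs) auto
  have "mx (conjs (rbL k)) \<le> k + 2"
    by (rule mx_conjs) (simp only: ball_rbL, use m1 in auto)
  then show "mx (phiR k) \<le> k + 2"
    unfolding phiR_def alls1 by (intro mx_exs) auto
qed

lemma RBDS_sem:
  assumes dom: "(G, k) \<in> pdom RBDS"
  shows "(G, k) \<in> pyes RBDS \<longleftrightarrow> models (normG G) (phiR k)"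
proof -
  have G: "inG 2 1 G" and col: "\<forall>v\<in>verts G. unary G 1 v \<longleftrightarrow> \<not> unary G 2 v"
    using dom by (auto simp: RBDS_def)
  have bo: "base_ok G" using G by (simp add: inG_def)
  have unV: "unary G i x \<Longrightarrow> x \<in> verts G" for i x using bo by (simp add: base_ok_def)
  have fin: "finite (verts G)" and ne: "verts G \<noteq> {}" using bo by (auto simp: base_ok_def)
  have vN: "verts (normG G) = verts G" by (simp add: normG_def)
  have setk: "set [1..<k+1] = {1..k}" by auto
  have body: "sat (normG G) b (conjs (rbL k)) \<longleftrightarrow>
     (\<forall>i\<in>{1..k}. b i \<in> verts G \<and> unary G 1 (b i)) \<and>
     (\<not> (b 0 \<in> verts G \<and> unary G 2 (b 0)) \<or> (\<exists>i\<in>{1..k}. adj G (b i) (b 0)))" for b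
    unfolding sat_conjs ball_rbL by (simp del: upt_Suc add: sat_disjs setk normG_def atLeastLessThanSuc_atLeastAtMost)
  have "models (normG G) (phiR k) \<longleftrightarrow> (\<exists>g. (\<forall>x\<in>{1..k}. g x \<in> verts G) \<and>
      (\<forall>v\<in>verts G. (\<forall>i\<in>{1..k}. g i \<in> verts G \<and> unary G 1 (g i)) \<and>
        (\<not> (v \<in> verts G \<and> unary G 2 v) \<or> (\<exists>i\<in>{1..k}. adj G (g i) v))))"
  proof -
    have ov: "((override_on (\<lambda>_. 0) g {1..k})(0 := v)) i = g i" if "i \<in> {1..k}" for g i v
      using that by (auto simp: override_on_def)
    have ov0: "((override_on (\<lambda>_. 0) g {1..k})(0 := v)) 0 = v" for g v by simp
    have "models (normG G) (phiR k) \<longleftrightarrow> (\<exists>g. (\<forall>x\<in>set [1..<k+1]. g x \<in> verts (normG G)) \<and>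
       sat (normG G) (override_on (\<lambda>_. 0) g (set [1..<k+1])) (FAll 0 (conjs (rbL k))))"
      unfolding models_def phiR_def alls1 by (rule sat_exs) (simp only: distinct_upt)
    then show ?thesis by (simp only: setk sat.simps vN body ov ov0 cong: ball_cong bex_cong)
  qed
  also have "\<dots> \<longleftrightarrow> (\<exists>D. D \<subseteq> {v. unary G 1 v} \<and> card D \<le> k \<and>
              (\<forall>b. unary G 2 b \<longrightarrow> (\<exists>d\<in>D. adj G d b)))" (is "?L \<longleftrightarrow> ?R")
  proof
    assume ?L
    then obtain g where g1: "\<forall>v\<in>verts G. (\<forall>i\<in>{1..k}. g i \<in> verts G \<and> unary G 1 (g i)) \<and>
        (\<not> (v \<in> verts G \<and> unary G 2 v) \<or> (\<exists>i\<in>{1..k}. adj G (g i) v))" by blast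
    obtain v0 where v0: "v0 \<in> verts G" using ne by blast
    have red: "\<forall>i\<in>{1..k}. unary G 1 (g i)" using g1 v0 by auto
    have s1: "g ` {1..k} \<subseteq> {v. unary G 1 v}" using red by auto
    have s2: "card (g ` {1..k}) \<le> k" using card_image_le[of "{1..k}" g] by simp
    have s3: "\<forall>b. unary G 2 b \<longrightarrow> (\<exists>d\<in>g ` {1..k}. adj G d b)"
    proof (intro allI impI)
      fix b assume b: "unary G 2 b"
      then have "b \<in> verts G" by (rule unV)
      then have "\<exists>i\<in>{1..k}. adj G (g i) b" using g1 b by auto
      then show "\<exists>d\<in>g ` {1..k}. adj G d b" by auto
    qed
    show ?R using s1 s2 s3 by blast
  next
    assume ?R
    then obtain D where D1: "D \<subseteq> {v. unary G 1 v}" and D2: "card D \<le> k"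
      and D3: "\<forall>b. unary G 2 b \<longrightarrow> (\<exists>d\<in>D. adj G d b)" by blast
    have DV: "D \<subseteq> verts G" using D1 unV by blast
    then have finD: "finite D" using fin finite_subset by blast
    obtain w where w: "unary G 1 w"
    proof (cases "D = {}")
      case True
      obtain v where v: "v \<in> verts G" using ne by blast
      have "\<not> unary G 2 v" using D3 True by blast
      then show ?thesis using that col v by blast
    next
      case False then show ?thesis using that D1 by blast
    qed
    obtain ds where ds: "set ds = D" "distinct ds" using finite_distinct_list[OF finD] by blast
    have lds: "length ds \<le> k" using distinct_card[OF ds(2)] ds(1) D2 by simp
    define g where "g i = (if 1 \<le> i \<and> i \<le> length ds then ds ! (i - 1) else w)" for i
    have gred: "unary G 1 (g i)" for i
    proof (cases "1 \<le> i \<and> i \<le> length ds")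
      case True
      then have "ds ! (i - 1) \<in> D" using ds(1) by auto
      then show ?thesis using True D1 by (auto simp: g_def)
    next
      case False then have "g i = w" unfolding g_def by auto
      then show ?thesis using w by simp
    qed
    have cover: "\<exists>i\<in>{1..k}. adj G (g i) v" if v2: "unary G 2 v" for v
    proof -
      obtain d where d: "d \<in> D" "adj G d v" using D3 v2 by blast
      then obtain j where j: "j < length ds" "ds ! j = d" using ds(1) by (auto simp: in_set_conv_nth)
      have "g (Suc j) = d" using j by (simp add: g_def)
      moreover have "Suc j \<in> {1..k}" using j lds by auto
      ultimately show ?thesis using d by blast
    qed
    have "\<forall>x\<in>{1..k}. g x \<in> verts G" using gred unV by blast
    moreover have "\<forall>v\<in>verts G. (\<forall>i\<in>{1..k}. g i \<in> verts G \<and> unary G 1 (g i)) \<and>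
        (\<not> (v \<in> verts G \<and> unary G 2 v) \<or> (\<exists>i\<in>{1..k}. adj G (g i) v))"
      using gred unV cover by blast
    ultimately show ?L by blast
  qed
  finally show ?thesis using dom by (auto simp: RBDS_def)
qed

lemma RBDS_W2: "RBDS \<in> DistW M 2"
  unfolding DistW_def
proof (rule CollectI, rule dreduces_gen[where \<phi>=phiR])
  show "\<exists>s0 t0. inG s0 t0 G" if "(G, k) \<in> pdom RBDS" for G k using that by (auto simp: RBDS_def)
  show "fcode (phiR k) \<le> pb k" for k by (rule phiR_pb)
  show "(G, k) \<in> pyes RBDS \<longleftrightarrow> (normG G, fcode (phiR k)) \<in> pyes (DMC (Sigma_t1 2))"
    if d: "(G, k) \<in> pdom RBDS" for G k
  proof -
    have col: "coloured (normG G)" using d inG_normG unfolding RBDS_def coloured_def by auto blast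
    have "(normG G, fcode (phiR k)) \<in> pyes (DMC (Sigma_t1 2)) \<longleftrightarrow> coloured (normG G) \<and>
       (\<exists>f\<in>Sigma_t1 2. sentence f \<and> fcode f = fcode (phiR k) \<and> models (normG G) f)"
      by (simp add: DMC_def)
    also have "\<dots> \<longleftrightarrow> models (normG G) (phiR k)"
    proof
      assume "coloured (normG G) \<and> (\<exists>f\<in>Sigma_t1 2. sentence f \<and> fcode f = fcode (phiR k) \<and> models (normG G) f)"
      then obtain f where "fcode f = fcode (phiR k)" "models (normG G) f" by blast
      then show "models (normG G) (phiR k)" using fcode_inj by metis
    next
      assume "models (normG G) (phiR k)"
      then show "coloured (normG G) \<and> (\<exists>f\<in>Sigma_t1 2. sentence f \<and> fcode f = fcode (phiR k) \<and> models (normG G) f)"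
        using col phiR_Sigma phiR_sentence by blast
    qed
    finally show ?thesis using RBDS_sem[OF d] by simp
  qed
qed

theorem mainTheorem6:
  fixes M :: dmodel
  shows "MIS \<in> DistW M 1 \<and> RBDS \<in> DistW M 2"
  using MIS_W1 RBDS_W2 by blast

end
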